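(* Let $1\le d_1\le d_2$, let $G=(V,E)$ be a finite connected undirected unweighted $(d_1,d_2)$-bidegreed graph with $n$ vertices, and let $\alpha=d_2/d_1$. Then for every $\lambda\in[0,1]$ and every initial mutant set $S_0\subseteq V$, the expected absorption time of the $\lambda$-mixed Moran process with fitness $r$ is at most $O_r(n^4\alpha^2)$ if $r\ne 1$ (i.e., at most $C_r n^4\alpha^2$ with $C_r$ depending only on $r$), and at most $O(n^4\alpha^4)$ if $r=1$.
   Context: A graph is $(d_1,d_2)$-bidegreed, $d_1\le d_2$, if every vertex has degree in $\{d_1,d_2\}$. The $\lambda$-mixed Moran process on a connected graph $G=(V,E)$ with $n=|V|\ge 2$: each vertex hosts a resident (fitness $1$) or mutant (fitness $r>0$); the state is the mutant set $S_t\subseteq V$. Each step, independently: with probability $\lambda$ a Birth-death step (a vertex $u$ chosen with probability proportional to fitness among all vertices; a uniformly random neighbor of $u$ takes $u$'s type); with probability $1-\lambda$ a death-Birth step (a uniformly random vertex $v$ dies; a neighbor $u$ of $v$ chosen with probability proportional to fitness among the neighbors of $v$; $v$ takes $u$'s type). The absorption time is the expected number of steps until $S_t\in\{\emptyset,V\}$. *)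

theory Defs
  imports "HOL-Analysis.Analysis"
begin

definition nbrs :: "nat set \<Rightarrow> (nat \<Rightarrow> nat \<Rightarrow> bool) \<Rightarrow> nat \<Rightarrow> nat set" where
  "nbrs V E v = {u \<in> V. E v u}"

definition deg :: "nat set \<Rightarrow> (nat \<Rightarrow> nat \<Rightarrow> bool) \<Rightarrow> nat \<Rightarrow> nat" where
  "deg V E v = card (nbrs V E v)"

definition simple_graph :: "nat set \<Rightarrow> (nat \<Rightarrow> nat \<Rightarrow> bool) \<Rightarrow> bool" where
  "simple_graph V E \<longleftrightarrow> finite V \<and> (\<forall>u v. E u v \<longrightarrow> u \<in> V \<and> v \<in> V)
     \<and> (\<forall>u v. E u v \<longrightarrow> E v u) \<and> (\<forall>v. \<not> E v v)"

definition connected_graph :: "nat set \<Rightarrow> (nat \<Rightarrow> nat \<Rightarrow> bool) \<Rightarrow> bool" where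
  "connected_graph V E \<longleftrightarrow> (\<forall>u\<in>V. \<forall>v\<in>V. E\<^sup>*\<^sup>* u v)"

definition bidegreed :: "nat set \<Rightarrow> (nat \<Rightarrow> nat \<Rightarrow> bool) \<Rightarrow> nat \<Rightarrow> nat \<Rightarrow> bool" where
  "bidegreed V E d1 d2 \<longleftrightarrow> d1 \<le> d2 \<and> (\<forall>v\<in>V. deg V E v \<in> {d1, d2})"

definition fit :: "real \<Rightarrow> nat set \<Rightarrow> nat \<Rightarrow> real" where
  "fit r S u = (if u \<in> S then r else 1)"

definition upd :: "nat set \<Rightarrow> nat \<Rightarrow> nat \<Rightarrow> nat set" where
  "upd S u v = (if u \<in> S then insert v S else S - {v})"

definition trans_prob ::
  "nat set \<Rightarrow> (nat \<Rightarrow> nat \<Rightarrow> bool) \<Rightarrow> real \<Rightarrow> real \<Rightarrow> nat set \<Rightarrow> nat set \<Rightarrow> real" where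
  "trans_prob V E r lam S S' =
     lam * (\<Sum>u\<in>V. \<Sum>v\<in>nbrs V E u.
        (fit r S u / (\<Sum>w\<in>V. fit r S w)) * (1 / real (deg V E u)) *
        (if upd S u v = S' then 1 else 0))
   + (1 - lam) * (\<Sum>v\<in>V. \<Sum>u\<in>nbrs V E v.
        (1 / real (card V)) * (fit r S u / (\<Sum>w\<in>nbrs V E v. fit r S w)) *
        (if upd S u v = S' then 1 else 0))"

definition absorbing :: "nat set \<Rightarrow> nat set \<Rightarrow> bool" where
  "absorbing V S \<longleftrightarrow> S = {} \<or> S = V"

text \<open>surv t S = probability that S_0, ..., S_{t-1} are all non-absorbing and S_t = S.\<close>
fun surv ::
  "nat set \<Rightarrow> (nat \<Rightarrow> nat \<Rightarrow> bool) \<Rightarrow> real \<Rightarrow> real \<Rightarrow> nat set \<Rightarrow> nat \<Rightarrow> nat set \<Rightarrow> real" where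
  "surv V E r lam S0 0 S = (if S = S0 then 1 else 0)"
| "surv V E r lam S0 (Suc t) S' =
     (\<Sum>S\<in>{S. S \<subseteq> V \<and> \<not> absorbing V S}. surv V E r lam S0 t S * trans_prob V E r lam S S')"

text \<open>Expected absorption time E[T] = sum over t of P(T > t), as an extended nonnegative real.\<close>
definition absorption_time ::
  "nat set \<Rightarrow> (nat \<Rightarrow> nat \<Rightarrow> bool) \<Rightarrow> real \<Rightarrow> real \<Rightarrow> nat set \<Rightarrow> ennreal" where
  "absorption_time V E r lam S0 =
     (\<Sum>t. ennreal (\<Sum>S\<in>{S. S \<subseteq> V \<and> \<not> absorbing V S}. surv V E r lam S0 t S))"

end

theory Submission
  imports Defs
begin


lemma abs_bound:
  fixes V :: "nat set" and g :: "nat set \<Rightarrow> real"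
  defines "N \<equiv> {S. S \<subseteq> V \<and> \<not> absorbing V S}"
  assumes finV: "finite V"
    and tp_nn: "\<And>S S'. 0 \<le> trans_prob V E r lam S S'"
    and mass: "\<And>S. S \<in> N \<Longrightarrow> (\<Sum>S'\<in>Pow V. trans_prob V E r lam S S') = 1"
    and gb: "\<And>S. S \<subseteq> V \<Longrightarrow> 0 \<le> g S \<and> g S \<le> K"
    and drift: "\<And>S. S \<in> N \<Longrightarrow> g S + eps \<le> (\<Sum>S'\<in>Pow V. trans_prob V E r lam S S' * g S')"
    and eps: "eps > 0"
    and S0: "S0 \<subseteq> V"
  shows "absorption_time V E r lam S0 \<le> ennreal (K / eps)"
proof -
  have finN: "finite N" unfolding N_def using finV by (auto intro: finite_subset[of _ "Pow V"])
  have NP: "N \<subseteq> Pow V" unfolding N_def by auto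
  have K0: "0 \<le> K" using gb[of "{}"] by auto
  have sn: "0 \<le> surv V E r lam S0 t S" for t S
  proof (induction t arbitrary: S)
    case 0 then show ?case by simp
  next
    case (Suc t) then show ?case
      by (auto intro!: sum_nonneg mult_nonneg_nonneg tp_nn)
  qed
  define A where "A t = (\<Sum>S\<in>N. surv V E r lam S0 t S)" for t
  define h where "h S = g S - K" for S
  define Psi where "Psi t = (\<Sum>S\<in>N. surv V E r lam S0 t S * h S)" for t
  have hle: "h S \<le> 0" if "S \<subseteq> V" for S using gb[OF that] by (simp add: h_def)
  have inner: "h S + eps \<le> (\<Sum>S'\<in>N. trans_prob V E r lam S S' * h S')" if "S \<in> N" for S
  proof -
    have "(\<Sum>S'\<in>Pow V. trans_prob V E r lam S S' * h S')
        = (\<Sum>S'\<in>Pow V. trans_prob V E r lam S S' * g S') - K * (\<Sum>S'\<in>Pow V. trans_prob V E r lam S S')"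
      by (simp add: h_def algebra_simps sum_subtractf sum_distrib_left)
    also have "\<dots> = (\<Sum>S'\<in>Pow V. trans_prob V E r lam S S' * g S') - K" using mass[OF that] by simp
    finally have e1: "(\<Sum>S'\<in>Pow V. trans_prob V E r lam S S' * h S') = (\<Sum>S'\<in>Pow V. trans_prob V E r lam S S' * g S') - K" .
    have "(\<Sum>S'\<in>Pow V. trans_prob V E r lam S S' * h S') \<le> (\<Sum>S'\<in>N. trans_prob V E r lam S S' * h S')"
    proof -
      have "(\<Sum>S'\<in>Pow V. trans_prob V E r lam S S' * h S') = (\<Sum>S'\<in>N. trans_prob V E r lam S S' * h S') + (\<Sum>S'\<in>Pow V - N. trans_prob V E r lam S S' * h S')"
        using NP finV by (metis (no_types, lifting) add.commute finite_Pow_iff sum.subset_diff)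
      moreover have "(\<Sum>S'\<in>Pow V - N. trans_prob V E r lam S S' * h S') \<le> 0"
        by (intro sum_nonpos mult_nonneg_nonpos tp_nn hle) auto
      ultimately show ?thesis by linarith
    qed
    then show ?thesis using e1 drift[OF that] by (simp add: h_def)
  qed
  have step: "Psi t + eps * A t \<le> Psi (Suc t)" for t
  proof -
    have "Psi (Suc t) = (\<Sum>S'\<in>N. (\<Sum>S\<in>N. surv V E r lam S0 t S * trans_prob V E r lam S S') * h S')"
      by (simp add: Psi_def N_def)
    also have "\<dots> = (\<Sum>S\<in>N. surv V E r lam S0 t S * (\<Sum>S'\<in>N. trans_prob V E r lam S S' * h S'))"
      unfolding sum_distrib_right
      apply (subst sum.swap)
      apply (simp add: sum_distrib_left mult.assoc)
      done
    also have "\<dots> \<ge> (\<Sum>S\<in>N. surv V E r lam S0 t S * (h S + eps))"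
      by (intro sum_mono mult_left_mono inner sn)
    finally have "(\<Sum>S\<in>N. surv V E r lam S0 t S * (h S + eps)) \<le> Psi (Suc t)" .
    moreover have "(\<Sum>S\<in>N. surv V E r lam S0 t S * (h S + eps)) = Psi t + eps * A t"
      unfolding Psi_def A_def by (simp add: algebra_simps sum.distrib sum_distrib_left)
    ultimately show ?thesis by simp
  qed
  have Psi_le: "Psi t \<le> 0" for t
    unfolding Psi_def by (intro sum_nonpos mult_nonneg_nonpos sn hle) (auto simp: N_def)
  have Psi0: "- K \<le> Psi 0"
  proof (cases "S0 \<in> N")
    case True
    have "Psi 0 = h S0" unfolding Psi_def using True finN by (simp add: if_distrib[of "\<lambda>x. x * _"] sum.delta cong: if_cong)
    then show ?thesis using gb[OF S0] by (simp add: h_def)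
  next
    case False
    have "Psi 0 = 0" unfolding Psi_def using False by (auto intro!: sum.neutral)
    then show ?thesis using K0 by simp
  qed
  have accum: "Psi 0 + eps * (\<Sum>i<t. A i) \<le> Psi t" for t
  proof (induction t)
    case 0 then show ?case by simp
  next
    case (Suc t) then show ?case using step[of t] by (simp add: algebra_simps)
  qed
  have A0: "0 \<le> A t" for t unfolding A_def by (intro sum_nonneg sn)
  have part: "(\<Sum>i<t. A i) \<le> K / eps" for t
  proof -
    have "eps * (\<Sum>i<t. A i) \<le> K" using accum[of t] Psi_le[of t] Psi0 by linarith
    then show ?thesis using eps by (simp add: field_simps mult.commute)
  qed
  have summ: "summable A" by (rule summableI_nonneg_bounded[OF A0 part])
  have "absorption_time V E r lam S0 = (\<Sum>t. ennreal (A t))"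
    unfolding absorption_time_def A_def N_def by simp
  also have "\<dots> = ennreal (\<Sum>t. A t)" by (rule suminf_ennreal2[OF A0 summ])
  also have "\<dots> \<le> ennreal (K / eps)"
    by (intro ennreal_leI suminf_le_const summ part)
  finally show ?thesis .
qed



locale mp =
  fixes V :: "nat set" and E :: "nat \<Rightarrow> nat \<Rightarrow> bool" and r lam :: real and d1 d2 :: nat
  assumes sg: "simple_graph V E" and conn: "connected_graph V E" and n2: "card V \<ge> 2"
    and d1: "1 \<le> d1" and bd: "bidegreed V E d1 d2" and lam0: "0 \<le> lam" and lam1: "lam \<le> 1"
    and rpos: "r > 0"
begin

abbreviation "n \<equiv> real (card V)"
abbreviation "dg x \<equiv> real (deg V E x)"
definition "F S = (\<Sum>w\<in>V. fit r S w)"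
definition "R S v = (\<Sum>w\<in>nbrs V E v. fit r S w)"
definition "pB S u v = fit r S u / F S * (1 / dg u)"
definition "pD S u v = 1 / n * (fit r S u / R S v)"
definition "q S u v = lam * pB S u v + (1 - lam) * pD S u v"
definition "w x = lam * (real d1 + real d2 - dg x) + (1 - lam) * dg x"
definition "chi S x = (if (x \<in> S) = (1 \<le> r) then 1 else (0::real))"
definition "psi S = (\<Sum>x\<in>V. w x * chi S x)"
definition "D S u v = w v * ((if (u \<in> S) = (1 \<le> r) then 1 else 0) - chi S v)"

lemma finV: "finite V" using sg by (simp add: simple_graph_def)
lemma Ein: "E u v \<Longrightarrow> u \<in> V \<and> v \<in> V" using sg by (simp add: simple_graph_def)
lemma Esym: "E u v \<Longrightarrow> E v u" using sg by (simp add: simple_graph_def)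
lemma Eirr: "\<not> E v v" using sg by (simp add: simple_graph_def)
lemma n_pos: "n \<ge> 2" using n2 by simp
lemma nbrs_sub: "nbrs V E v \<subseteq> V" by (auto simp: nbrs_def)
lemma fin_nbrs: "finite (nbrs V E v)" using finV nbrs_sub finite_subset by blast
lemma deg_in: "v \<in> V \<Longrightarrow> deg V E v = d1 \<or> deg V E v = d2" using bd by (auto simp: bidegreed_def)
lemma d12: "d1 \<le> d2" using bd by (simp add: bidegreed_def)
lemma deg_ge: "v \<in> V \<Longrightarrow> dg v \<ge> 1" using deg_in[of v] d1 d12 by auto
lemma deg_le: "dg v \<le> n" unfolding deg_def using card_mono[OF finV nbrs_sub] by simp
lemma nbrs_ne: "v \<in> V \<Longrightarrow> nbrs V E v \<noteq> {}" using deg_ge[of v] by (auto simp: deg_def)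

lemma fit_pos: "fit r S x > 0" using rpos by (simp add: fit_def)
lemma fit_ub: "fit r S x \<le> 1 + r" using rpos by (simp add: fit_def)
lemma fit_ge1: "1 \<le> r \<Longrightarrow> 1 \<le> fit r S x \<and> fit r S x \<le> r" by (simp add: fit_def)
lemma fit_le1: "r \<le> 1 \<Longrightarrow> r \<le> fit r S x \<and> fit r S x \<le> 1" by (simp add: fit_def)

lemma F_pos: "F S > 0"
proof -
  have "V \<noteq> {}" using n2 by auto
  then show ?thesis unfolding F_def using finV fit_pos by (intro sum_pos) auto
qed
lemma R_pos: "v \<in> V \<Longrightarrow> R S v > 0"
  unfolding R_def using fin_nbrs nbrs_ne fit_pos by (intro sum_pos) auto

lemma F_ub: "F S \<le> n * (1 + r)"
  unfolding F_def using sum_bounded_above[of V "fit r S" "1 + r"] fit_ub by auto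
lemma R_ub: "R S v \<le> dg v * (1 + r)"
  unfolding R_def deg_def using sum_bounded_above[of "nbrs V E v" "fit r S" "1 + r"] fit_ub by auto

lemma F_bounds1: "1 \<le> r \<Longrightarrow> n \<le> F S \<and> F S \<le> n * r"
  unfolding F_def using sum_bounded_above[of V "fit r S" r] sum_bounded_below[of V 1 "fit r S"] fit_ge1
  by auto
lemma F_bounds2: "r \<le> 1 \<Longrightarrow> n * r \<le> F S \<and> F S \<le> n"
  unfolding F_def using sum_bounded_above[of V "fit r S" 1] sum_bounded_below[of V r "fit r S"] fit_le1
  by auto
lemma R_bounds1: "1 \<le> r \<Longrightarrow> dg v \<le> R S v \<and> R S v \<le> dg v * r"
  unfolding R_def deg_def using sum_bounded_above[of "nbrs V E v" "fit r S" r]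
    sum_bounded_below[of "nbrs V E v" 1 "fit r S"] fit_ge1
  by auto
lemma R_bounds2: "r \<le> 1 \<Longrightarrow> dg v * r \<le> R S v \<and> R S v \<le> dg v"
  unfolding R_def deg_def using sum_bounded_above[of "nbrs V E v" "fit r S" 1]
    sum_bounded_below[of "nbrs V E v" r "fit r S"] fit_le1
  by auto

lemma w_bounds: "x \<in> V \<Longrightarrow> real d1 \<le> w x \<and> w x \<le> real d2"
proof -
  assume x: "x \<in> V"
  have dd: "0 \<le> real d2 - real d1" using d12 by simp
  have a: "0 \<le> lam * (real d2 - real d1)" "0 \<le> (1 - lam) * (real d2 - real d1)"
    using dd lam0 lam1 by auto
  show ?thesis
  proof (cases "deg V E x = d1")
    case True
    then show ?thesis using a unfolding w_def by (simp add: algebra_simps)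
  next
    case False
    then have "deg V E x = d2" using deg_in[OF x] by auto
    then show ?thesis using a unfolding w_def by (simp add: algebra_simps)
  qed
qed

end


lemma dsum_ind:
  assumes "finite A" "finite I" "\<And>i. i \<in> I \<Longrightarrow> finite (J i)"
    "\<And>i j. i \<in> I \<Longrightarrow> j \<in> J i \<Longrightarrow> X i j \<in> A"
  shows "(\<Sum>S'\<in>A. (\<Sum>i\<in>I. \<Sum>j\<in>J i. c i j * (if X i j = S' then 1 else (0::real))) * f S')
       = (\<Sum>i\<in>I. \<Sum>j\<in>J i. c i j * f (X i j))"
proof -
  have "(\<Sum>S'\<in>A. (\<Sum>i\<in>I. \<Sum>j\<in>J i. c i j * (if X i j = S' then 1 else (0::real))) * f S')
      = (\<Sum>S'\<in>A. \<Sum>i\<in>I. \<Sum>j\<in>J i. c i j * (if X i j = S' then 1 else (0::real)) * f S')"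
    by (simp add: sum_distrib_right)
  also have "\<dots> = (\<Sum>i\<in>I. \<Sum>S'\<in>A. \<Sum>j\<in>J i. c i j * (if X i j = S' then 1 else (0::real)) * f S')"
    by (rule sum.swap)
  also have "\<dots> = (\<Sum>i\<in>I. \<Sum>j\<in>J i. \<Sum>S'\<in>A. c i j * (if X i j = S' then 1 else (0::real)) * f S')"
    by (intro sum.cong refl sum.swap)
  also have "\<dots> = (\<Sum>i\<in>I. \<Sum>j\<in>J i. c i j * f (X i j))"
  proof (intro sum.cong refl)
    fix i j assume "i \<in> I" "j \<in> J i"
    then have "X i j \<in> A" using assms by auto
    then show "(\<Sum>S'\<in>A. c i j * (if X i j = S' then 1 else (0::real)) * f S') = c i j * f (X i j)"
      using assms(1) by (simp add: if_distrib[of "\<lambda>x. c i j * x * _"] sum.delta cong: if_cong)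
  qed
  finally show ?thesis .
qed

context mp begin

lemma tp_split: "trans_prob V E r lam S S' =
   lam * (\<Sum>u\<in>V. \<Sum>v\<in>nbrs V E u. pB S u v * (if upd S u v = S' then 1 else 0))
 + (1 - lam) * (\<Sum>v\<in>V. \<Sum>u\<in>nbrs V E v. pD S u v * (if upd S u v = S' then 1 else 0))"
  by (simp add: trans_prob_def pB_def pD_def F_def R_def)

lemma upd_in: "S \<subseteq> V \<Longrightarrow> u \<in> V \<Longrightarrow> v \<in> V \<Longrightarrow> upd S u v \<in> Pow V"
  by (auto simp: upd_def)

lemma expect:
  assumes S: "S \<subseteq> V"
  shows "(\<Sum>S'\<in>Pow V. trans_prob V E r lam S S' * f S') =
    lam * (\<Sum>u\<in>V. \<Sum>v\<in>nbrs V E u. pB S u v * f (upd S u v))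
  + (1 - lam) * (\<Sum>v\<in>V. \<Sum>u\<in>nbrs V E v. pD S u v * f (upd S u v))"
proof -
  have e1: "(\<Sum>S'\<in>Pow V. (\<Sum>u\<in>V. \<Sum>v\<in>nbrs V E u. pB S u v * (if upd S u v = S' then 1 else 0)) * f S')
     = (\<Sum>u\<in>V. \<Sum>v\<in>nbrs V E u. pB S u v * f (upd S u v))"
    by (rule dsum_ind[where X="\<lambda>u v. upd S u v" and c="\<lambda>u v. pB S u v"])
      (use S finV fin_nbrs nbrs_sub in \<open>auto simp: upd_def\<close>)
  have e2: "(\<Sum>S'\<in>Pow V. (\<Sum>v\<in>V. \<Sum>u\<in>nbrs V E v. pD S u v * (if upd S u v = S' then 1 else 0)) * f S')
     = (\<Sum>v\<in>V. \<Sum>u\<in>nbrs V E v. pD S u v * f (upd S u v))"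
    by (rule dsum_ind[where X="\<lambda>v u. upd S u v" and c="\<lambda>v u. pD S u v"])
      (use S finV fin_nbrs nbrs_sub in \<open>auto simp: upd_def\<close>)
  have "(\<Sum>S'\<in>Pow V. trans_prob V E r lam S S' * f S') =
     lam * (\<Sum>S'\<in>Pow V. (\<Sum>u\<in>V. \<Sum>v\<in>nbrs V E u. pB S u v * (if upd S u v = S' then 1 else 0)) * f S')
   + (1 - lam) * (\<Sum>S'\<in>Pow V. (\<Sum>v\<in>V. \<Sum>u\<in>nbrs V E v. pD S u v * (if upd S u v = S' then 1 else 0)) * f S')"
    unfolding tp_split by (simp add: sum.distrib sum_distrib_left algebra_simps)
  then show ?thesis using e1 e2 by simp
qed

lemma nbrs_sum: "(\<Sum>v\<in>nbrs V E u. f v) = (\<Sum>v\<in>V. if E u v then f v else 0)"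
  unfolding nbrs_def using finV by (simp add: sum.inter_filter)

lemma expectq:
  assumes S: "S \<subseteq> V"
  shows "(\<Sum>S'\<in>Pow V. trans_prob V E r lam S S' * f S') =
    (\<Sum>u\<in>V. \<Sum>v\<in>V. if E u v then q S u v * f (upd S u v) else 0)"
proof -
  have a: "(\<Sum>v\<in>V. \<Sum>u\<in>nbrs V E v. pD S u v * f (upd S u v))
      = (\<Sum>u\<in>V. \<Sum>v\<in>V. if E u v then pD S u v * f (upd S u v) else 0)"
  proof -
    have "(\<Sum>v\<in>V. \<Sum>u\<in>nbrs V E v. pD S u v * f (upd S u v))
       = (\<Sum>v\<in>V. \<Sum>u\<in>V. if E v u then pD S u v * f (upd S u v) else 0)"
      by (simp add: nbrs_sum)
    also have "\<dots> = (\<Sum>u\<in>V. \<Sum>v\<in>V. if E v u then pD S u v * f (upd S u v) else 0)"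
      by (rule sum.swap)
    also have "\<dots> = (\<Sum>u\<in>V. \<Sum>v\<in>V. if E u v then pD S u v * f (upd S u v) else 0)"
      using Esym by (intro sum.cong refl) metis
    finally show ?thesis .
  qed
  have b: "(\<Sum>u\<in>V. \<Sum>v\<in>nbrs V E u. pB S u v * f (upd S u v))
      = (\<Sum>u\<in>V. \<Sum>v\<in>V. if E u v then pB S u v * f (upd S u v) else 0)"
    by (simp add: nbrs_sum)
  have c: "lam * (if E u v then pB S u v * f (upd S u v) else 0) + (1 - lam) * (if E u v then pD S u v * f (upd S u v) else 0)
     = (if E u v then q S u v * f (upd S u v) else 0)" for u v
    by (simp add: q_def algebra_simps)
  show ?thesis unfolding expect[OF S] a b
    by (simp add: sum_distrib_left sum.distrib[symmetric] c)
qed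

lemma massB: "(\<Sum>u\<in>V. \<Sum>v\<in>nbrs V E u. pB S u v) = 1"
proof -
  have "(\<Sum>v\<in>nbrs V E u. pB S u v) = fit r S u / F S" if u: "u \<in> V" for u
  proof -
    have "dg u \<ge> 1" using deg_ge[OF u] .
    then show ?thesis by (simp add: pB_def deg_def)
  qed
  then have "(\<Sum>u\<in>V. \<Sum>v\<in>nbrs V E u. pB S u v) = (\<Sum>u\<in>V. fit r S u / F S)" by simp
  also have "\<dots> = F S / F S" unfolding F_def by (rule sum_divide_distrib[symmetric])
  finally show ?thesis using F_pos[of S] by simp
qed

lemma massD: "(\<Sum>v\<in>V. \<Sum>u\<in>nbrs V E v. pD S u v) = 1"
proof -
  have "(\<Sum>u\<in>nbrs V E v. pD S u v) = 1 / n" if v: "v \<in> V" for v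
  proof -
    have e: "(\<Sum>u\<in>nbrs V E v. pD S u v) = 1 / n * (\<Sum>u\<in>nbrs V E v. fit r S u / R S v)"
      by (simp add: pD_def sum_distrib_left)
    have "(\<Sum>u\<in>nbrs V E v. fit r S u / R S v) = R S v / R S v"
      unfolding R_def by (rule sum_divide_distrib[symmetric])
    then show ?thesis using R_pos[OF v, of S] e by simp
  qed
  then have "(\<Sum>v\<in>V. \<Sum>u\<in>nbrs V E v. pD S u v) = (\<Sum>v\<in>V. 1 / n)" by simp
  then show ?thesis using n_pos by simp
qed

lemma mass: "S \<subseteq> V \<Longrightarrow> (\<Sum>S'\<in>Pow V. trans_prob V E r lam S S') = 1"
  using expect[of S "\<lambda>_. 1"] massB[of S] massD[of S] by simp

lemma massq: assumes S: "S \<subseteq> V" shows "(\<Sum>u\<in>V. \<Sum>v\<in>V. if E u v then q S u v else 0) = 1"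
proof -
  have "(\<Sum>S'\<in>Pow V. trans_prob V E r lam S S' * 1) = (\<Sum>u\<in>V. \<Sum>v\<in>V. if E u v then q S u v * 1 else 0)"
    by (rule expectq[OF S])
  then show ?thesis using mass[OF S] by (simp only: mult_1_right)
qed

lemma pB_nn: "0 \<le> pB S u v" using fit_pos[of S u] F_pos[of S] by (simp add: pB_def)
lemma R_nn: "0 \<le> R S v" unfolding R_def using fit_pos by (intro sum_nonneg) (auto intro: less_imp_le)
lemma pD_nn: "0 \<le> pD S u v" using fit_pos[of S u] R_nn[of S v] by (simp add: pD_def)
lemma q_nn: "0 \<le> q S u v" unfolding q_def using pB_nn pD_nn lam0 lam1
  by (intro add_nonneg_nonneg mult_nonneg_nonneg) auto

lemma tp_nn: "0 \<le> trans_prob V E r lam S S'"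
  unfolding tp_split using pB_nn pD_nn lam0 lam1
  by (intro add_nonneg_nonneg mult_nonneg_nonneg sum_nonneg) auto

end


context mp begin

lemma psi_upd:
  assumes u: "u \<in> V" and v: "v \<in> V"
  shows "psi (upd S u v) = psi S + D S u v"
proof -
  have split: "psi X = w v * chi X v + (\<Sum>x\<in>V - {v}. w x * chi X x)" for X
    unfolding psi_def using finV v by (simp add: sum.remove)
  have same: "(\<Sum>x\<in>V - {v}. w x * chi (upd S u v) x) = (\<Sum>x\<in>V - {v}. w x * chi S x)"
    by (intro sum.cong refl) (auto simp: chi_def upd_def)
  have cv: "chi (upd S u v) v = (if (u \<in> S) = (1 \<le> r) then 1 else 0)"
    by (auto simp: chi_def upd_def)
  show ?thesis unfolding split[of "upd S u v"] split[of S] same cv D_def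
    by (simp add: algebra_simps)
qed

lemma key:
  assumes ab: "E a b" and aS: "a \<in> S" and bS: "b \<notin> S"
  shows "(1 \<le> r \<longrightarrow> q S b a * w a \<le> q S a b * w b) \<and> (r \<le> 1 \<longrightarrow> q S a b * w b \<le> q S b a * w a)"
proof -
  have a: "a \<in> V" and b: "b \<in> V" using Ein[OF ab] by auto
  define da where "da = dg a"
  define db where "db = dg b"
  have da1: "da \<ge> 1" and db1: "db \<ge> 1" using deg_ge a b by (auto simp: da_def db_def)
  have np: "n > 0" using n_pos by simp
  have Fp: "F S > 0" by (rule F_pos)
  have Rap: "R S a > 0" and Rbp: "R S b > 0" using R_pos a b by auto
  define Qab where "Qab = lam * (1 / n * (1 / da)) + (1 - lam) * (1 / n * (1 / db))"
  define Qba where "Qba = lam * (1 / n * (1 / db)) + (1 - lam) * (1 / n * (1 / da))"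
  have qab: "q S a b = lam * (r / F S * (1 / da)) + (1 - lam) * (1 / n * (r / R S b))"
    using aS by (simp add: q_def pB_def pD_def fit_def da_def)
  have qba: "q S b a = lam * (1 / F S * (1 / db)) + (1 - lam) * (1 / n * (1 / R S a))"
    using bS by (simp add: q_def pB_def pD_def fit_def db_def)
  have wa0: "0 \<le> w a" and wb0: "0 \<le> w b" using w_bounds a b by (auto intro: order_trans[of 0 "real d1"])
  have ident: "Qab * w b = Qba * w a"
  proof (cases "deg V E a = deg V E b")
    case True
    then show ?thesis by (simp add: Qab_def Qba_def w_def da_def db_def)
  next
    case False
    then have "(deg V E a = d1 \<and> deg V E b = d2) \<or> (deg V E a = d2 \<and> deg V E b = d1)"
      using deg_in a b by metis
    then have wa: "w a = lam * db + (1 - lam) * da" and wb: "w b = lam * da + (1 - lam) * db"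
      by (auto simp: w_def da_def db_def)
    show ?thesis unfolding wa wb Qab_def Qba_def using da1 db1 np
      by (simp add: field_simps)
  qed
  have l0: "0 \<le> lam" "0 \<le> 1 - lam" using lam0 lam1 by auto
  have c1: "1 \<le> r \<longrightarrow> q S b a * w a \<le> q S a b * w b"
  proof
    assume r1: "1 \<le> r"
    have Fb: "n \<le> F S" "F S \<le> n * r" using F_bounds1[OF r1] by auto
    have Rb: "R S b \<le> db * r" using R_bounds1[OF r1] by (auto simp: db_def)
    have Ra: "da \<le> R S a" using R_bounds1[OF r1] by (auto simp: da_def)
    have i1: "1 / n \<le> r / F S" using Fb np Fp by (simp add: field_simps)
    have i2: "1 / db \<le> r / R S b" using Rb db1 Rbp by (simp add: field_simps)
    have i3: "1 / F S \<le> 1 / n" using Fb np Fp by (simp add: field_simps)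
    have i4: "1 / R S a \<le> 1 / da" using Ra da1 Rap by (simp add: field_simps)
    have "Qab \<le> q S a b" unfolding qab Qab_def using i1 i2 l0 da1 np
      by (intro add_mono mult_left_mono mult_right_mono) auto
    moreover have "q S b a \<le> Qba" unfolding qba Qba_def using i3 i4 l0 db1 np
      by (intro add_mono mult_left_mono mult_right_mono) auto
    ultimately show "q S b a * w a \<le> q S a b * w b"
      using ident wa0 wb0 by (metis mult_right_mono order_trans)
  qed
  have c2: "r \<le> 1 \<longrightarrow> q S a b * w b \<le> q S b a * w a"
  proof
    assume r1: "r \<le> 1"
    have Fb: "n * r \<le> F S" "F S \<le> n" using F_bounds2[OF r1] by auto
    have Rb: "db * r \<le> R S b" using R_bounds2[OF r1] by (auto simp: db_def)
    have Ra: "R S a \<le> da" using R_bounds2[OF r1] by (auto simp: da_def)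
    have i1: "r / F S \<le> 1 / n" using Fb np Fp by (simp add: field_simps)
    have i2: "r / R S b \<le> 1 / db" using Rb db1 Rbp by (simp add: field_simps)
    have i3: "1 / n \<le> 1 / F S" using Fb np Fp by (simp add: field_simps)
    have i4: "1 / da \<le> 1 / R S a" using Ra da1 Rap by (simp add: field_simps)
    have "q S a b \<le> Qab" unfolding qab Qab_def using i1 i2 l0 da1 np
      by (intro add_mono mult_left_mono mult_right_mono) auto
    moreover have "Qba \<le> q S b a" unfolding qba Qba_def using i3 i4 l0 db1 np
      by (intro add_mono mult_left_mono mult_right_mono) auto
    ultimately show "q S a b * w b \<le> q S b a * w a"
      using ident wa0 wb0 by (metis mult_right_mono order_trans)
  qed
  show ?thesis using c1 c2 by blast
qed

lemma pair_nn:
  assumes uv: "E u v"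
  shows "0 \<le> q S u v * D S u v + q S v u * D S v u"
proof -
  have vu: "E v u" using Esym[OF uv] .
  consider "u \<in> S" "v \<notin> S" | "u \<notin> S" "v \<in> S" | "(u \<in> S) = (v \<in> S)" by blast
  then show ?thesis
  proof cases
    case 1
    then show ?thesis using key[OF uv 1] by (cases "1 \<le> r") (auto simp: D_def chi_def)
  next
    case 2
    then show ?thesis using key[OF vu 2(2) 2(1)] by (cases "1 \<le> r") (auto simp: D_def chi_def)
  next
    case 3
    then show ?thesis by (auto simp: D_def chi_def)
  qed
qed

lemma drift1: "0 \<le> (\<Sum>u\<in>V. \<Sum>v\<in>V. if E u v then q S u v * D S u v else 0)"
proof -
  define H where "H u v = (if E u v then q S u v * D S u v else 0)" for u v
  have sw: "(\<Sum>u\<in>V. \<Sum>v\<in>V. H u v) = (\<Sum>u\<in>V. \<Sum>v\<in>V. H v u)" by (rule sum.swap)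
  have "0 \<le> (\<Sum>u\<in>V. \<Sum>v\<in>V. H u v + H v u)"
  proof (intro sum_nonneg)
    fix u v
    show "0 \<le> H u v + H v u"
    proof (cases "E u v")
      case True
      then show ?thesis using pair_nn[OF True] Esym[OF True] by (simp add: H_def)
    next
      case False
      then have "\<not> E v u" using Esym by blast
      then show ?thesis using False by (simp add: H_def)
    qed
  qed
  also have "\<dots> = 2 * (\<Sum>u\<in>V. \<Sum>v\<in>V. H u v)"
    using sw by (simp add: sum.distrib)
  finally show ?thesis by (simp add: H_def)
qed

lemma crossing:
  assumes S: "S \<subseteq> V" "S \<noteq> {}" "S \<noteq> V"
  shows "\<exists>a b. E a b \<and> a \<in> S \<and> b \<notin> S"
proof -
  obtain a0 where a0: "a0 \<in> S" using S by auto
  obtain b0 where b0: "b0 \<in> V" "b0 \<notin> S" using S by auto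
  have p: "E\<^sup>*\<^sup>* a0 b0" using conn a0 b0 S unfolding connected_graph_def by auto
  have "\<And>x. E\<^sup>*\<^sup>* x y \<Longrightarrow> x \<in> S \<Longrightarrow> y \<notin> S \<Longrightarrow> \<exists>a b. E a b \<and> a \<in> S \<and> b \<notin> S" for y
  proof -
    fix x assume "E\<^sup>*\<^sup>* x y" "x \<in> S" "y \<notin> S"
    then show "\<exists>a b. E a b \<and> a \<in> S \<and> b \<notin> S"
    proof (induction rule: rtranclp_induct)
      case base then show ?case by simp
    next
      case (step y z)
      then show ?case by (cases "y \<in> S") auto
    qed
  qed
  then show ?thesis using p a0 b0 by blast
qed

lemma qsum_lb:
  assumes ab: "E a b" and aS: "a \<in> S" and bS: "b \<notin> S"
  shows "1 / n^2 \<le> q S a b + q S b a"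
proof -
  have a: "a \<in> V" and b: "b \<in> V" using Ein[OF ab] by auto
  define da where "da = dg a"
  define db where "db = dg b"
  have da1: "da \<ge> 1" and db1: "db \<ge> 1" using deg_ge a b by (auto simp: da_def db_def)
  have dan: "da \<le> n" and dbn: "db \<le> n" using deg_le by (auto simp: da_def db_def)
  have np: "n > 0" using n_pos by simp
  have Fp: "F S > 0" by (rule F_pos)
  have Rap: "R S a > 0" and Rbp: "R S b > 0" using R_pos a b by auto
  have qab: "q S a b = lam * (r / F S * (1 / da)) + (1 - lam) * (1 / n * (r / R S b))"
    using aS by (simp add: q_def pB_def pD_def fit_def da_def)
  have qba: "q S b a = lam * (1 / F S * (1 / db)) + (1 - lam) * (1 / n * (1 / R S a))"
    using bS by (simp add: q_def pB_def pD_def fit_def db_def)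
  define c where "c = 1 / (n * (1 + r) * n)"
  have nz: "0 < n * n + r * (n * n)" by (intro add_pos_pos mult_pos_pos) (use np rpos in auto)
  have cp: "c * (1 + r) = 1 / n^2" using rpos np nz by (simp add: c_def field_simps power2_eq_square)
  have F1: "F S * da \<le> n * (1 + r) * n" using F_ub[of S] dan Fp da1 by (intro mult_mono) auto
  have F2: "F S * db \<le> n * (1 + r) * n" using F_ub[of S] dbn Fp db1 by (intro mult_mono) auto
  have R1: "n * R S b \<le> n * (1 + r) * n"
  proof -
    have "dg b * (1 + r) \<le> n * (1 + r)" using dbn rpos by (intro mult_right_mono) (auto simp: db_def)
    then have "R S b \<le> n * (1 + r)" using R_ub[of S b] by linarith
    then have "n * R S b \<le> n * (n * (1 + r))" using np by (intro mult_left_mono) auto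
    then show ?thesis by (simp add: algebra_simps)
  qed
  have R2: "n * R S a \<le> n * (1 + r) * n"
  proof -
    have "dg a * (1 + r) \<le> n * (1 + r)" using dan rpos by (intro mult_right_mono) (auto simp: da_def)
    then have "R S a \<le> n * (1 + r)" using R_ub[of S a] by linarith
    then have "n * R S a \<le> n * (n * (1 + r))" using np by (intro mult_left_mono) auto
    then show ?thesis by (simp add: algebra_simps)
  qed
  have pos: "0 < n * (1 + r) * n" using np rpos by simp
  have j1: "c \<le> 1 / (F S * da)" unfolding c_def using F1 Fp da1 pos
    by (intro divide_left_mono) auto
  have j2: "c \<le> 1 / (F S * db)" unfolding c_def using F2 Fp db1 pos
    by (intro divide_left_mono) auto
  have j3: "c \<le> 1 / (n * R S b)" unfolding c_def using R1 np Rbp pos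
    by (intro divide_left_mono) auto
  have j4: "c \<le> 1 / (n * R S a)" unfolding c_def using R2 np Rap pos
    by (intro divide_left_mono) auto
  have B: "c * (1 + r) \<le> r / F S * (1 / da) + 1 / F S * (1 / db)"
  proof -
    have "c * (1 + r) = r * c + c" by (simp add: algebra_simps)
    also have "\<dots> \<le> r * (1 / (F S * da)) + 1 / (F S * db)"
      using j1 j2 rpos by (intro add_mono mult_left_mono) auto
    finally show ?thesis by simp
  qed
  have Dd: "c * (1 + r) \<le> 1 / n * (r / R S b) + 1 / n * (1 / R S a)"
  proof -
    have "c * (1 + r) = r * c + c" by (simp add: algebra_simps)
    also have "\<dots> \<le> r * (1 / (n * R S b)) + 1 / (n * R S a)"
      using j3 j4 rpos by (intro add_mono mult_left_mono) auto
    finally show ?thesis by simp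
  qed
  have "q S a b + q S b a = lam * (r / F S * (1 / da) + 1 / F S * (1 / db))
        + (1 - lam) * (1 / n * (r / R S b) + 1 / n * (1 / R S a))"
    unfolding qab qba by (simp add: algebra_simps)
  also have "\<dots> \<ge> lam * (c * (1 + r)) + (1 - lam) * (c * (1 + r))"
    using B Dd lam0 lam1 by (intro add_mono mult_left_mono) auto
  finally show ?thesis using cp by (simp add: algebra_simps)
qed

lemma D_sq:
  assumes "a \<in> S" "b \<notin> S"
  shows "(D S a b)^2 = (w b)^2" "(D S b a)^2 = (w a)^2"
  using assms by (cases "1 \<le> r"; simp add: D_def chi_def)+

lemma drift2:
  assumes S: "S \<subseteq> V" "S \<noteq> {}" "S \<noteq> V"
  shows "real d1 ^ 2 / n^2 \<le> (\<Sum>u\<in>V. \<Sum>v\<in>V. if E u v then q S u v * (D S u v)^2 else 0)"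
proof -
  obtain a b where ab: "E a b" "a \<in> S" "b \<notin> S" using crossing[OF S] by blast
  have a: "a \<in> V" and b: "b \<in> V" using Ein[OF ab(1)] by auto
  have neq: "a \<noteq> b" using ab by auto
  define H where "H u v = (if E u v then q S u v * (D S u v)^2 else 0)" for u v
  have Hnn: "0 \<le> H u v" for u v unfolding H_def using q_nn by simp
  have rowa: "H a b \<le> (\<Sum>v\<in>V. H a v)" using b finV Hnn by (intro member_le_sum) auto
  have rowb: "H b a \<le> (\<Sum>v\<in>V. H b v)" using a finV Hnn by (intro member_le_sum) auto
  have "(\<Sum>v\<in>V. H a v) + (\<Sum>v\<in>V. H b v) = (\<Sum>u\<in>{a, b}. \<Sum>v\<in>V. H u v)" using neq by simp
  also have "\<dots> \<le> (\<Sum>u\<in>V. \<Sum>v\<in>V. H u v)"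
    using a b finV Hnn by (intro sum_mono2 sum_nonneg) auto
  finally have tot: "H a b + H b a \<le> (\<Sum>u\<in>V. \<Sum>v\<in>V. H u v)" using rowa rowb by linarith
  have Hab: "H a b = q S a b * (w b)^2" and Hba: "H b a = q S b a * (w a)^2"
    using ab Esym[OF ab(1)] D_sq[OF ab(2,3)] by (auto simp: H_def)
  have wa: "real d1 ^ 2 \<le> (w a)^2" and wb: "real d1 ^ 2 \<le> (w b)^2"
    using w_bounds[OF a] w_bounds[OF b] by (auto intro: power_mono)
  have "real d1 ^ 2 / n^2 = real d1 ^ 2 * (1 / n^2)" by simp
  also have "\<dots> \<le> real d1 ^ 2 * (q S a b + q S b a)"
    using qsum_lb[OF ab] by (intro mult_left_mono) auto
  also have "\<dots> = q S a b * real d1 ^ 2 + q S b a * real d1 ^ 2" by (simp add: algebra_simps)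
  also have "\<dots> \<le> H a b + H b a" unfolding Hab Hba
    using wa wb q_nn by (intro add_mono mult_left_mono) auto
  also have "\<dots> \<le> (\<Sum>u\<in>V. \<Sum>v\<in>V. H u v)" by (rule tot)
  finally show ?thesis by (simp add: H_def)
qed

end


context mp begin

lemma psi_nn: "0 \<le> psi S"
  unfolding psi_def using w_bounds by (intro sum_nonneg mult_nonneg_nonneg) (auto simp: chi_def intro: order_trans[of 0 "real d1"])

lemma psi_ub: "psi S \<le> n * real d2"
proof -
  have "psi S \<le> (\<Sum>x\<in>V. real d2)" unfolding psi_def
  proof (intro sum_mono)
    fix x assume x: "x \<in> V"
    have "w x * chi S x \<le> w x" using w_bounds[OF x] by (auto simp: chi_def intro: order_trans[of 0 "real d1"])
    then show "w x * chi S x \<le> real d2" using w_bounds[OF x] by linarith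
  qed
  then show ?thesis by simp
qed

lemma drift_main:
  assumes S: "S \<subseteq> V" and na: "\<not> absorbing V S"
  shows "(psi S)^2 + real d1 ^ 2 / n^2 \<le> (\<Sum>S'\<in>Pow V. trans_prob V E r lam S S' * (psi S')^2)"
proof -
  define p where "p = psi S"
  have t: "(if E u v then q S u v * (psi (upd S u v))^2 else 0)
     = p^2 * (if E u v then q S u v else 0) + 2 * p * (if E u v then q S u v * D S u v else 0)
       + (if E u v then q S u v * (D S u v)^2 else 0)" for u v
  proof (cases "E u v")
    case True
    then have "psi (upd S u v) = p + D S u v" using psi_upd Ein p_def by blast
    then show ?thesis using True by (simp add: power2_eq_square algebra_simps)
  qed simp
  have "(\<Sum>S'\<in>Pow V. trans_prob V E r lam S S' * (psi S')^2)
      = (\<Sum>u\<in>V. \<Sum>v\<in>V. if E u v then q S u v * (psi (upd S u v))^2 else 0)"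
    by (rule expectq[OF S])
  also have "\<dots> = p^2 * (\<Sum>u\<in>V. \<Sum>v\<in>V. if E u v then q S u v else 0)
      + 2 * p * (\<Sum>u\<in>V. \<Sum>v\<in>V. if E u v then q S u v * D S u v else 0)
      + (\<Sum>u\<in>V. \<Sum>v\<in>V. if E u v then q S u v * (D S u v)^2 else 0)"
    unfolding t by (simp add: sum.distrib sum_distrib_left)
  finally have eq: "(\<Sum>S'\<in>Pow V. trans_prob V E r lam S S' * (psi S')^2) = p^2
      + 2 * p * (\<Sum>u\<in>V. \<Sum>v\<in>V. if E u v then q S u v * D S u v else 0)
      + (\<Sum>u\<in>V. \<Sum>v\<in>V. if E u v then q S u v * (D S u v)^2 else 0)"
    using massq[OF S] by simp
  have "0 \<le> 2 * p * (\<Sum>u\<in>V. \<Sum>v\<in>V. if E u v then q S u v * D S u v else 0)"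
    using drift1[of S] psi_nn[of S] p_def by simp
  moreover have "real d1 ^ 2 / n^2 \<le> (\<Sum>u\<in>V. \<Sum>v\<in>V. if E u v then q S u v * (D S u v)^2 else 0)"
    using drift2[of S] S na by (auto simp: absorbing_def)
  ultimately have "p^2 + real d1 ^ 2 / n^2 \<le> (\<Sum>S'\<in>Pow V. trans_prob V E r lam S S' * (psi S')^2)"
    using eq by linarith
  then show ?thesis unfolding p_def .
qed

lemma bound: "S0 \<subseteq> V \<Longrightarrow> absorption_time V E r lam S0 \<le> ennreal (n^4 * (real d2 / real d1)^2)"
proof -
  assume S0: "S0 \<subseteq> V"
  have np: "n > 0" using n_pos by simp
  have d1p: "real d1 > 0" using d1 by simp
  have eps: "real d1 ^ 2 / n^2 > 0" using np d1p by simp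
  have gb: "0 \<le> (psi S)^2 \<and> (psi S)^2 \<le> (n * real d2)^2" for S
    using psi_nn[of S] psi_ub[of S] by (auto intro: power_mono)
  have "absorption_time V E r lam S0 \<le> ennreal ((n * real d2)^2 / (real d1 ^ 2 / n^2))"
    by (rule abs_bound[where g="\<lambda>S. (psi S)^2"])
      (use finV tp_nn mass gb drift_main eps S0 in auto)
  also have "(n * real d2)^2 / (real d1 ^ 2 / n^2) = n^4 * (real d2 / real d1)^2"
    using np d1p by (simp add: field_simps power2_eq_square eval_nat_numeral)
  finally show ?thesis .
qed

end

theorem mainTheorem11:
  fixes r :: real
  assumes "r > 0"
  shows "(r \<noteq> 1 \<longrightarrow> (\<exists>C::real. \<forall>(V::nat set) E (d1::nat) d2 (lam::real) S0.
             simple_graph V E \<and> connected_graph V E \<and> card V \<ge> 2 \<and> 1 \<le> d1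
             \<and> bidegreed V E d1 d2 \<and> 0 \<le> lam \<and> lam \<le> 1 \<and> S0 \<subseteq> V \<longrightarrow>
             absorption_time V E r lam S0
               \<le> ennreal (C * real (card V) ^ 4 * (real d2 / real d1) ^ 2)))
       \<and> (r = 1 \<longrightarrow> (\<exists>C::real. \<forall>(V::nat set) E (d1::nat) d2 (lam::real) S0.
             simple_graph V E \<and> connected_graph V E \<and> card V \<ge> 2 \<and> 1 \<le> d1
             \<and> bidegreed V E d1 d2 \<and> 0 \<le> lam \<and> lam \<le> 1 \<and> S0 \<subseteq> V \<longrightarrow>
             absorption_time V E r lam S0
               \<le> ennreal (C * real (card V) ^ 4 * (real d2 / real d1) ^ 4)))"
proof -
  have B: "absorption_time V E r lam S0 \<le> ennreal (1 * real (card V) ^ 4 * (real d2 / real d1) ^ 2)"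
    if h: "simple_graph V E \<and> connected_graph V E \<and> card V \<ge> 2 \<and> 1 \<le> d1
             \<and> bidegreed V E d1 d2 \<and> 0 \<le> lam \<and> lam \<le> 1 \<and> S0 \<subseteq> V" for V E d1 d2 lam S0
  proof -
    interpret mp V E r lam d1 d2 using h assms by unfold_locales auto
    show ?thesis using bound h by simp
  qed
  have B4: "absorption_time V E r lam S0 \<le> ennreal (1 * real (card V) ^ 4 * (real d2 / real d1) ^ 4)"
    if h: "simple_graph V E \<and> connected_graph V E \<and> card V \<ge> 2 \<and> 1 \<le> d1
             \<and> bidegreed V E d1 d2 \<and> 0 \<le> lam \<and> lam \<le> 1 \<and> S0 \<subseteq> V" for V E d1 d2 lam S0
  proof -
    have "d1 \<le> d2" using h by (simp add: bidegreed_def)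
    then have a1: "1 \<le> real d2 / real d1" using h by simp
    then have "(real d2 / real d1) ^ 2 \<le> (real d2 / real d1) ^ 4"
      by (intro power_increasing) auto
    then have "1 * real (card V) ^ 4 * (real d2 / real d1) ^ 2 \<le> 1 * real (card V) ^ 4 * (real d2 / real d1) ^ 4"
      by (intro mult_left_mono) auto
    then show ?thesis using B[OF h] by (meson ennreal_leI order_trans)
  qed
  show ?thesis using B B4 by blast
qed


end
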